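(* Let $\sigma$ be any position of the parallel chip-firing game on $K_{a,b}$ ($a,b\ge1$). If $p(\sigma)$ is odd then $p(\sigma)\le\min(a,b)$, and if $p(\sigma)$ is even then $p(\sigma)\le 2\min(a,b)$.
   Context: Parallel chip-firing game: a position $\sigma$ assigns a nonnegative integer to each vertex; in each step every vertex $v$ with $\sigma(v)\ge\deg(v)$ simultaneously sends one chip to each neighbor. $K_{a,b}$ is the complete bipartite graph with sides of sizes $a$ and $b$. The period $p(\sigma)$ is the least positive integer $p$ such that $U^{t+p}\sigma=U^t\sigma$ for all sufficiently large $t$, where $U$ is the step operator. *)

theory Defs
  imports Main
begin

(* A finite simple graph given by vertex set V and symmetric irreflexive adjacency E. *)
definition deg :: "'v set \<Rightarrow> ('v \<Rightarrow> 'v \<Rightarrow> bool) \<Rightarrow> 'v \<Rightarrow> nat" where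
  "deg V E v = card {w \<in> V. E v w}"

definition pstep :: "'v set \<Rightarrow> ('v \<Rightarrow> 'v \<Rightarrow> bool) \<Rightarrow> ('v \<Rightarrow> nat) \<Rightarrow> ('v \<Rightarrow> nat)" where
  "pstep V E \<sigma> = (\<lambda>v. if v \<in> V then
       (if \<sigma> v \<ge> deg V E v then \<sigma> v - deg V E v else \<sigma> v)
       + card {w \<in> V. E v w \<and> \<sigma> w \<ge> deg V E w}
     else \<sigma> v)"

definition period :: "'v set \<Rightarrow> ('v \<Rightarrow> 'v \<Rightarrow> bool) \<Rightarrow> ('v \<Rightarrow> nat) \<Rightarrow> nat" where
  "period V E \<sigma> = (LEAST p. p > 0 \<and>
      (\<exists>T. \<forall>t\<ge>T. (pstep V E ^^ (t + p)) \<sigma> = (pstep V E ^^ t) \<sigma>))"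

definition Kab_V :: "nat \<Rightarrow> nat \<Rightarrow> (nat + nat) set" where
  "Kab_V a b = Inl ` {..<a} \<union> Inr ` {..<b}"

definition Kab_E :: "(nat + nat) \<Rightarrow> (nat + nat) \<Rightarrow> bool" where
  "Kab_E x y = ((isl x \<and> \<not> isl y) \<or> (\<not> isl x \<and> isl y))"

end

theory Submission
  imports Defs "HOL-Library.FuncSet"
begin


lemma card_Suc_filter: "card {s. s < Suc n \<and> P s} = card {s. s < n \<and> P s} + (if P n then 1 else 0)"
proof -
  have "{s. s < Suc n \<and> P s} = (if P n then insert n {s. s < n \<and> P s} else {s. s < n \<and> P s})"
    by (auto simp: less_Suc_eq)
  then show ?thesis by simp
qed

lemma sum_card_swap: fixes N a :: nat shows "(\<Sum>s<N. card {i. i<a \<and> P s i}) = (\<Sum>i<a. card {s. s<N \<and> P s i})"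
proof (induction N)
  case 0 then show ?case by simp
next
  case (Suc N)
  have "card {i. i<a \<and> P N i} = (\<Sum>i<a. (if P N i then 1 else 0))"
    by (induction a) (simp_all add: card_Suc_filter)
  then show ?case using Suc by (simp add: card_Suc_filter sum.distrib)
qed

lemma funpow_shift:
  fixes F :: "nat \<Rightarrow> nat"
  assumes "\<And>z. F (z + d) = F z + d" shows "(F^^m) (z + c*d) = (F^^m) z + c*d"
proof -
  have F: "F (w + c*d) = F w + c*d" for w c
  proof (induction c)
    case 0 then show ?case by simp
  next
    case (Suc c)
    have "w + Suc c * d = (w + c*d) + d" by simp
    then show ?case using Suc assms[of "w + c*d"] by (simp add: ac_simps)
  qed
  show ?thesis by (induction m) (simp_all add: F)
qed

lemma fix_lemma:
  fixes G :: "nat \<Rightarrow> nat"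
  assumes mono: "mono G" and sh: "\<And>z c. G (z + c*e) = G z + c*e"
    and it: "(G^^g) u = u + g*e" and g: "g > 0"
  shows "G u = u + e"
proof -
  obtain g' where g': "g = Suc g'" using g by (cases g) auto
  have Ge: "G (u + e) = G u + e" using sh[of u 1] by simp
  show ?thesis
  proof (cases "G u \<ge> u + e")
    case True
    have "(G^^(Suc j)) u \<ge> G u + j*e" for j
    proof (induction j)
      case 0 then show ?case by simp
    next
      case (Suc j)
      have "(G^^(Suc (Suc j))) u = G ((G^^(Suc j)) u)" by simp
      moreover have "G ((G^^(Suc j)) u) \<ge> G (G u + j*e)" using Suc mono by (simp add: monoD)
      moreover have "G (G u + j*e) = G (G u) + j*e" by (rule sh)
      moreover have "G (G u) \<ge> G (u + e)" using True mono by (simp add: monoD)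
      ultimately show ?case using Ge by simp
    qed
    from this[of g'] it g' have "u + e \<ge> G u" by simp
    then show ?thesis using True by simp
  next
    case False
    have "(G^^(Suc j)) u \<le> G u + j*e" for j
    proof (induction j)
      case 0 then show ?case by simp
    next
      case (Suc j)
      have "(G^^(Suc (Suc j))) u = G ((G^^(Suc j)) u)" by simp
      moreover have "G ((G^^(Suc j)) u) \<le> G (G u + j*e)" using Suc mono by (simp add: monoD)
      moreover have "G (G u + j*e) = G (G u) + j*e" by (rule sh)
      moreover have "G (G u) \<le> G (u + e)" using False mono by (simp add: monoD)
      ultimately show ?case using Ge by simp
    qed
    from this[of g'] it g' have "u + e \<le> G u" by simp
    then show ?thesis using False by simp
  qed
qed

lemma noninc_periodic:
  fixes f :: "nat \<Rightarrow> nat"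
  assumes dec: "\<And>t. f (Suc t) \<le> f t" and per: "\<And>t. f (t+p) = f t" and p: "p > 0"
  shows "f (Suc t) = f t"
proof -
  have le: "f (s + m) \<le> f s" for s m
  proof (induction m)
    case 0 then show ?case by simp
  next
    case (Suc m) then show ?case using dec[of "s+m"] by simp
  qed
  have "f (Suc t + (p - 1)) \<le> f (Suc t)" by (rule le)
  moreover have "Suc t + (p - 1) = t + p" using p by simp
  ultimately have "f t \<le> f (Suc t)" using per[of t] by simp
  then show ?thesis using dec[of t] by simp
qed

lemma odd_bound:
  fixes P n :: nat
  assumes "n > 0" "n dvd P" "P \<le> 2*n" "odd P" shows "P \<le> n"
proof -
  obtain c where c: "P = n*c" using assms(2) by blast
  have "c \<le> 2" using assms(1,3) c by simp
  moreover have "odd c" using assms(4) c by simp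
  ultimately have "c = 1" by presburger
  then show ?thesis using c by simp
qed




locale bip = fixes a b :: nat and x y :: "nat \<Rightarrow> nat \<Rightarrow> nat"
 assumes a1: "a \<ge> 1" and b1: "b \<ge> 1"
 and xstep: "\<And>t i. i < a \<Longrightarrow> x (Suc t) i = (if x t i \<ge> b then x t i - b else x t i) + card {j. j<b \<and> y t j \<ge> a}"
 and ystep: "\<And>t j. j < b \<Longrightarrow> y (Suc t) j = (if y t j \<ge> a then y t j - a else y t j) + card {i. i<a \<and> x t i \<ge> b}"
begin
definition "R t = card {j. j<b \<and> y t j \<ge> a}"
definition "S n = (\<Sum>s<n. R s)"
definition "NP z = (\<Sum>i<a. (x 0 i + z) div b)"
end

sublocale bip \<subseteq> sw: bip b a y x
  using bip_axioms unfolding bip_def by auto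

context bip begin

lemma xstep': "i < a \<Longrightarrow> x (Suc t) i = (if x t i \<ge> b then x t i - b else x t i) + R t"
  by (simp add: xstep R_def)

lemma R_le: "R t \<le> b"
  unfolding R_def using card_mono[of "{..<b}" "{j. j<b \<and> y t j \<ge> a}"] by auto

lemma S_Suc: "S (Suc n) = S n + R n" by (simp add: S_def)

lemma S_mono: "n \<le> m \<Longrightarrow> S n \<le> S m"
proof (induction m)
  case 0 then show ?case by simp
next
  case (Suc m) then show ?case by (cases "n = Suc m") (auto simp: S_Suc)
qed

lemma E1: "i<a \<Longrightarrow> x n i + b * card {s. s<n \<and> b \<le> x s i} = x 0 i + S n"
proof (induction n)
  case 0 then show ?case by (simp add: S_def)
next
  case (Suc n)
  then show ?case by (cases "b \<le> x n i") (auto simp: xstep' card_Suc_filter S_Suc algebra_simps)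
qed

lemma div_helper: "r < (b::nat) \<Longrightarrow> (r + q*b) div b = q" by simp

lemma E2: assumes "i<a" "x n i < 2*b" shows "card {s. s < Suc n \<and> b \<le> x s i} = (x 0 i + S n) div b"
proof (cases "b \<le> x n i")
  case True
  have "x 0 i + S n = (x n i - b) + (card {s. s<n \<and> b \<le> x s i} + 1) * b"
    using E1[OF assms(1), of n] True by (simp add: algebra_simps)
  moreover have "x n i - b < b" using assms True by simp
  ultimately have "(x 0 i + S n) div b = card {s. s<n \<and> b \<le> x s i} + 1"
    using div_helper[of "x n i - b" "card {s. s<n \<and> b \<le> x s i} + 1"] by simp
  then show ?thesis using True by (simp add: card_Suc_filter)
next
  case False
  have "x 0 i + S n = x n i + (card {s. s<n \<and> b \<le> x s i}) * b"
    using E1[OF assms(1), of n] by (simp add: algebra_simps)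
  moreover have "x n i < b" using False by simp
  ultimately have "(x 0 i + S n) div b = card {s. s<n \<and> b \<le> x s i}"
    using div_helper[of "x n i" "card {s. s<n \<and> b \<le> x s i}"] by simp
  then show ?thesis using False by (simp add: card_Suc_filter)
qed

lemma E3: assumes "i<a" "x n i < 2*b" shows "x (Suc n) i + b * ((x 0 i + S n) div b) = x 0 i + S (Suc n)"
  using E1[OF assms(1), of "Suc n"] E2[OF assms] by simp

lemma T_NP: assumes "\<And>t i. i<a \<Longrightarrow> x t i < 2*b" shows "sw.S (Suc n) = NP (S n)"
proof -
  have "sw.S (Suc n) = (\<Sum>s<Suc n. card {i. i<a \<and> b \<le> x s i})" by (simp add: sw.S_def sw.R_def)
  also have "\<dots> = (\<Sum>i<a. card {s. s<Suc n \<and> b \<le> x s i})" by (rule sum_card_swap)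
  also have "\<dots> = (\<Sum>i<a. (x 0 i + S n) div b)" using E2 assms by (intro sum.cong) auto
  finally show ?thesis by (simp add: NP_def)
qed

lemma NP_mono: "mono NP"
  unfolding NP_def by (intro monoI sum_mono div_le_mono) auto

lemma NP_shift: "NP (z + c*b) = NP z + c*a"
proof -
  have "(x 0 i + (z + c*b)) div b = (x 0 i + z) div b + c" for i
    using b1 by (simp add: add.assoc[symmetric])
  then show ?thesis by (simp add: NP_def sum.distrib mult.commute)
qed

lemma xbound: "i<a \<Longrightarrow> x t i \<le> max (x 0 i) (2*b)"
proof (induction t)
  case 0 then show ?case by simp
next
  case (Suc t) then show ?case using R_le[of t] by (cases "b \<le> x t i") (auto simp: xstep')
qed

end
context bip begin
lemma det: assumes "\<forall>i<a. x s i = x t i" "\<forall>j<b. y s j = y t j"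
  shows "(\<forall>i<a. x (Suc s) i = x (Suc t) i) \<and> (\<forall>j<b. y (Suc s) j = y (Suc t) j)"
proof -
  have "R s = R t" unfolding R_def using assms by (intro arg_cong[where f=card]) auto
  moreover have "sw.R s = sw.R t" unfolding sw.R_def using assms by (intro arg_cong[where f=card]) auto
  ultimately show ?thesis using assms by (simp add: xstep' sw.xstep')
qed

end



context bip begin

lemma trivial:
  assumes p: "p > 0"
    and perx: "\<And>t i. i<a \<Longrightarrow> x (t+p) i = x t i" and pery: "\<And>t j. j<b \<Longrightarrow> y (t+p) j = y t j"
    and i1: "i1 < a" and big: "x t1 i1 \<ge> 2*b"
  shows "(\<forall>i<a. x (Suc t) i = x t i) \<and> (\<forall>j<b. y (Suc t) j = y t j)"
proof -
  have periter: "x (s + m*p) i = x s i" if "i<a" for s m i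
  proof (induction m)
    case 0 then show ?case by simp
  next
    case (Suc m)
    have "x (s + Suc m * p) i = x ((s + m*p) + p) i" by (simp add: algebra_simps)
    then show ?case using perx[OF that] Suc by simp
  qed
  have below: "x (s + m) i < 2*b" if "i<a" "x s i < 2*b" for s m i
  proof (induction m)
    case 0 then show ?case using that by simp
  next
    case (Suc m) then show ?case using R_le[of "s+m"] that(1)
      by (cases "b \<le> x (s+m) i") (auto simp: xstep')
  qed
  have above: "x s i1 \<ge> 2*b" for s
  proof (rule ccontr)
    assume "\<not> x s i1 \<ge> 2*b"
    then have "x (s + (t1 + s*p - s)) i1 < 2*b" using below i1 by simp
    moreover have "s \<le> s*p" using p by simp
    then have "s + (t1 + s*p - s) = t1 + s*p" by linarith
    ultimately show False using periter[OF i1, of t1 s] big by simp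
  qed
  have Rb: "R s = b" for s
  proof -
    have "x (Suc s) i1 = x s i1" for s
    proof (rule noninc_periodic[where f="\<lambda>s. x s i1" and p=p])
      show "x (Suc s) i1 \<le> x s i1" for s using above[of s] R_le[of s] i1 by (simp add: xstep')
      show "x (s + p) i1 = x s i1" for s using perx i1 by simp
    qed (rule p)
    from this[of s] have "(if b \<le> x s i1 then x s i1 - b else x s i1) + R s = x s i1"
      using i1 by (simp add: xstep')
    then show ?thesis using above[of s] by (simp split: if_splits)
  qed
  have yfire: "a \<le> y s j" if "j<b" for s j
  proof -
    have "{j. j<b \<and> a \<le> y s j} = {..<b}"
      using Rb[of s] unfolding R_def by (intro card_subset_eq) auto
    then show ?thesis using that by auto
  qed
  have Lb: "sw.R s = a" for s
  proof -
    have j0: "0 < b" using b1 by simp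
    have "y (Suc s) 0 = y s 0" for s
    proof (rule noninc_periodic[where f="\<lambda>s. y s 0" and p=p])
      show "y (Suc s) 0 \<le> y s 0" for s using yfire[OF j0, of s] sw.R_le[of s] j0 by (simp add: sw.xstep')
      show "y (s + p) 0 = y s 0" for s using pery j0 by simp
    qed (rule p)
    from this[of s] have "(if a \<le> y s 0 then y s 0 - a else y s 0) + sw.R s = y s 0"
      using j0 by (simp add: sw.xstep')
    then show ?thesis using yfire[OF j0, of s] by (simp split: if_splits)
  qed
  have xfire: "b \<le> x s i" if "i<a" for s i
  proof -
    have "{i. i<a \<and> b \<le> x s i} = {..<a}"
      using Lb[of s] unfolding sw.R_def by (intro card_subset_eq) auto
    then show ?thesis using that by auto
  qed
  show ?thesis using xfire yfire Rb Lb by (simp add: xstep' sw.xstep')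
qed

end



context bip begin

lemma main:
  assumes p: "p > 0"
    and perx: "\<And>t i. i<a \<Longrightarrow> x (t+p) i = x t i" and pery: "\<And>t j. j<b \<Longrightarrow> y (t+p) j = y t j"
    and bx: "\<And>t i. i<a \<Longrightarrow> x t i < 2*b" and byy: "\<And>t j. j<b \<Longrightarrow> y t j < 2*a"
  shows "\<exists>\<nu>>0. \<nu> \<le> a \<and> \<nu> dvd p \<and> (\<forall>t\<ge>2. (\<forall>i<a. x (t+2*\<nu>) i = x t i) \<and> (\<forall>j<b. y (t+2*\<nu>) j = y t j))"
proof -
  define T where "T = sw.S"
  define F where "F = NP \<circ> sw.NP"
  have TS: "T (Suc n) = NP (S n)" for n using T_NP bx by (simp add: T_def)
  have ST: "S (Suc n) = sw.NP (T n)" for n using sw.T_NP byy by (simp add: T_def)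
  have F2: "T (Suc (Suc n)) = F (T n)" for n by (simp add: TS ST F_def)
  have Fmono: "mono F" using NP_mono sw.NP_mono unfolding F_def mono_def by simp
  have Fsh: "F (z + a) = F z + a" for z
    using sw.NP_shift[of z 1] NP_shift[of "sw.NP z" 1] by (simp add: F_def)
  have Tit: "T (n + 2*m) = (F^^m) (T n)" for n m
  proof (induction m)
    case 0 then show ?case by simp
  next
    case (Suc m)
    have "T (n + 2 * Suc m) = T (Suc (Suc (n + 2*m)))" by simp
    then show ?case using F2 Suc by simp
  qed
  have Rp: "R (t+p) = R t" for t unfolding R_def using pery by (intro arg_cong[where f=card]) auto
  have Lp: "sw.R (t+p) = sw.R t" for t unfolding sw.R_def using perx by (intro arg_cong[where f=card]) auto
  have Sp: "S (n+p) = S n + S p" for n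
    by (induction n) (simp_all add: S_Suc Rp S_def)
  have Tp: "T (n+p) = T n + T p" for n
    by (induction n) (simp_all add: T_def sw.S_Suc Lp sw.S_def)
  define k where "k = card {s. s<p \<and> b \<le> x s 0}"
  have a0: "0 < a" using a1 by simp
  have Spk: "S p = b*k" using E1[OF a0, of p] perx[OF a0, of 0] by (simp add: k_def)
  have ci: "card {s. s<p \<and> b \<le> x s i} = k" if "i<a" for i
  proof -
    have "x p i + b * card {s. s<p \<and> b \<le> x s i} = x 0 i + b*k"
      using E1[OF that, of p] Spk by simp
    then have "b * card {s. s<p \<and> b \<le> x s i} = b*k" using perx[OF that, of 0] by simp
    then show ?thesis using b1 by simp
  qed
  have Tpk: "T p = a*k"
  proof -
    have "T p = (\<Sum>s<p. card {i. i<a \<and> b \<le> x s i})" by (simp add: T_def sw.S_def sw.R_def)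
    also have "\<dots> = (\<Sum>i<a. card {s. s<p \<and> b \<le> x s i})" by (rule sum_card_swap)
    also have "\<dots> = (\<Sum>i<a. k)" using ci by (intro sum.cong) auto
    finally show ?thesis by simp
  qed
  define g where "g = gcd (2*k) p"
  define \<nu> where "\<nu> = p div g"
  define \<mu> where "\<mu> = 2*k div g"
  have gpos: "g > 0" using p by (simp add: g_def)
  have pg: "p = \<nu> * g" unfolding \<nu>_def g_def by simp
  have kg: "2*k = \<mu> * g" unfolding \<mu>_def g_def by simp
  have cop: "coprime \<mu> \<nu>" unfolding \<mu>_def \<nu>_def g_def
    using div_gcd_coprime[of "2*k" p] p by simp
  have \<nu>pos: "\<nu> > 0" using pg p by (cases \<nu>) auto
  have TpN: "T (n + m*p) = T n + m*(a*k)" for n m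
  proof (induction m)
    case 0 then show ?case by simp
  next
    case (Suc m)
    have "T (n + Suc m * p) = T ((n + m*p) + p)" by (simp add: algebra_simps)
    then show ?case using Tp Tpk Suc by simp
  qed
  have A: "T (n + 2*\<nu>) = T n + \<mu>*a" for n
  proof -
    define G where "G = F^^\<nu>"
    have "(G^^g) (T n) = (F^^(\<nu>*g)) (T n)" by (simp add: G_def funpow_mult)
    also have "\<dots> = T (n + 2*p)" using Tit[of n "\<nu>*g"] pg by simp
    also have "\<dots> = T n + g*(\<mu>*a)" using TpN[of n 2] kg by (simp add: algebra_simps)
    finally have it: "(G^^g) (T n) = T n + g*(\<mu>*a)" .
    have "G (T n) = T n + \<mu>*a"
    proof (rule fix_lemma[OF _ _ it gpos])
      show "mono G" unfolding G_def using Fmono by (rule mono_pow)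
      show "G (z + c*(\<mu>*a)) = G z + c*(\<mu>*a)" for z c
        unfolding G_def using funpow_shift[of F a \<nu> z "c*\<mu>"] Fsh by (simp add: algebra_simps)
    qed
    then show ?thesis using Tit[of n \<nu>] by (simp add: G_def)
  qed
  have SA: "S (Suc n + 2*\<nu>) = S (Suc n) + \<mu>*b" for n
  proof -
    have "S (Suc n + 2*\<nu>) = S (Suc (n + 2*\<nu>))" by simp
    also have "\<dots> = sw.NP (T n + \<mu>*a)" using ST A by simp
    also have "\<dots> = S (Suc n) + \<mu>*b" using sw.NP_shift ST by simp
    finally show ?thesis .
  qed
  have Cx: "x (Suc (Suc n) + 2*\<nu>) i = x (Suc (Suc n)) i" if "i<a" for n i
  proof -
    have e1: "x (Suc (Suc n + 2*\<nu>)) i + b * ((x 0 i + S (Suc n + 2*\<nu>)) div b) = x 0 i + S (Suc (Suc n + 2*\<nu>))"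
      by (rule E3[OF that bx[OF that]])
    have e2: "x (Suc (Suc n)) i + b * ((x 0 i + S (Suc n)) div b) = x 0 i + S (Suc (Suc n))"
      by (rule E3[OF that bx[OF that]])
    have s1: "S (Suc n + 2*\<nu>) = S (Suc n) + \<mu>*b" by (rule SA)
    have s2: "S (Suc (Suc n + 2*\<nu>)) = S (Suc (Suc n)) + \<mu>*b" using SA[of "Suc n"] by simp
    have "(x 0 i + (S (Suc n) + \<mu>*b)) div b = (x 0 i + S (Suc n)) div b + \<mu>"
      using b1 by (simp add: add.assoc[symmetric])
    then show ?thesis using e1 e2 s1 s2 by (simp add: algebra_simps)
  qed
  have Cy: "y (Suc n + 2*\<nu>) j = y (Suc n) j" if "j<b" for n j
  proof -
    have e1: "y (Suc (n + 2*\<nu>)) j + a * ((y 0 j + T (n + 2*\<nu>)) div a) = y 0 j + T (Suc (n + 2*\<nu>))"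
      unfolding T_def by (rule sw.E3[OF that byy[OF that]])
    have e2: "y (Suc n) j + a * ((y 0 j + T n) div a) = y 0 j + T (Suc n)"
      unfolding T_def by (rule sw.E3[OF that byy[OF that]])
    have s1: "T (n + 2*\<nu>) = T n + \<mu>*a" by (rule A)
    have s2: "T (Suc (n + 2*\<nu>)) = T (Suc n) + \<mu>*a" using A[of "Suc n"] by simp
    have "(y 0 j + (T n + \<mu>*a)) div a = (y 0 j + T n) div a + \<mu>"
      using a1 by (simp add: add.assoc[symmetric])
    then show ?thesis using e1 e2 s1 s2 by (simp add: algebra_simps)
  qed
  have Tmono: "T n \<le> T m" if "n \<le> m" for n m unfolding T_def using that by (rule sw.S_mono)
  have distinct: "T (2*i) mod a \<noteq> T (2*j) mod a" if ij: "i < j" "j < \<nu>" for i j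
  proof
    assume eq: "T (2*i) mod a = T (2*j) mod a"
    define d where "d = j - i"
    have dpos: "d > 0" "d < \<nu>" using ij by (auto simp: d_def)
    have le: "T (2*i) \<le> T (2*j)" using ij by (intro Tmono) simp
    have "a dvd T (2*j) - T (2*i)" using mod_eq_dvd_iff_nat[OF le, of a] eq by simp
    then obtain c where c: "T (2*j) - T (2*i) = a*c" by blast
    have Tj: "T (2*i + 2*d) = T (2*i) + c*a" using c le ij by (simp add: d_def algebra_simps)
    have it1: "T (2*i + m*(2*d)) = T (2*i) + m*(c*a)" for m
    proof (induction m)
      case 0 then show ?case by simp
    next
      case (Suc m)
      have "T (2*i + Suc m*(2*d)) = (F^^d) (T (2*i + m*(2*d)))"
        using Tit[of "2*i + m*(2*d)" d] by (simp add: algebra_simps)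
      also have "\<dots> = (F^^d) (T (2*i)) + (m*c)*a" using Suc funpow_shift[of F a d "T (2*i)" "m*c"] Fsh
        by (simp add: algebra_simps)
      also have "(F^^d) (T (2*i)) = T (2*i + 2*d)" using Tit[of "2*i" d] by simp
      finally show ?case using Tj by (simp add: algebra_simps)
    qed
    have it2: "T (2*i + m*(2*\<nu>)) = T (2*i) + m*(\<mu>*a)" for m
    proof (induction m)
      case 0 then show ?case by simp
    next
      case (Suc m)
      have "T (2*i + Suc m*(2*\<nu>)) = T ((2*i + m*(2*\<nu>)) + 2*\<nu>)" by (simp add: algebra_simps)
      then show ?case using A Suc by simp
    qed
    have "T (2*i) + \<nu>*(c*a) = T (2*i) + d*(\<mu>*a)"
      using it1[of \<nu>] it2[of d] by (simp add: algebra_simps)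
    then have "\<nu>*c = d*\<mu>" using a1 by simp
    then have "\<nu> dvd d*\<mu>" by (metis dvd_triv_left)
    then have "\<nu> dvd d" using cop by (simp add: coprime_commute coprime_dvd_mult_left_iff)
    then show False using dpos by (simp add: nat_dvd_not_less)
  qed
  have inj: "inj_on (\<lambda>i. T (2*i) mod a) {..<\<nu>}"
  proof (rule inj_onI)
    fix i j assume "i \<in> {..<\<nu>}" "j \<in> {..<\<nu>}" "T (2*i) mod a = T (2*j) mod a"
    then show "i = j" using distinct[of i j] distinct[of j i] by (cases i j rule: linorder_cases) auto
  qed
  have "card {..<\<nu>} \<le> card {..<a}"
    by (rule card_inj_on_le[OF inj]) (use a1 in auto)
  then have B: "\<nu> \<le> a" by simp
  have dv: "\<nu> dvd p" using pg by simp
  have "\<forall>t\<ge>2. (\<forall>i<a. x (t+2*\<nu>) i = x t i) \<and> (\<forall>j<b. y (t+2*\<nu>) j = y t j)"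
  proof (intro allI impI)
    fix t :: nat assume t: "2 \<le> t"
    then obtain n where n: "t = Suc (Suc n)" by (metis add_2_eq_Suc le_Suc_ex)
    show "(\<forall>i<a. x (t+2*\<nu>) i = x t i) \<and> (\<forall>j<b. y (t+2*\<nu>) j = y t j)"
      using Cx[of _ n] Cy[of _ "Suc n"] n by simp
  qed
  then show ?thesis using \<nu>pos B dv by blast
qed

end



lemma Kab_deg_Inl: "i < a \<Longrightarrow> deg (Kab_V a b) Kab_E (Inl i) = b"
proof -
  assume "i<a"
  have "{w \<in> Kab_V a b. Kab_E (Inl i) w} = Inr ` {..<b}"
    by (auto simp: Kab_V_def Kab_E_def)
  then show ?thesis by (simp add: deg_def card_image)
qed

lemma Kab_deg_Inr: "j < b \<Longrightarrow> deg (Kab_V a b) Kab_E (Inr j) = a"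
proof -
  assume "j<b"
  have "{w \<in> Kab_V a b. Kab_E (Inr j) w} = Inl ` {..<a}"
    by (auto simp: Kab_V_def Kab_E_def)
  then show ?thesis by (simp add: deg_def card_image)
qed

lemma Kab_fire_Inl: "i < a \<Longrightarrow>
   card {w \<in> Kab_V a b. Kab_E (Inl i) w \<and> deg (Kab_V a b) Kab_E w \<le> f w} = card {j. j<b \<and> a \<le> f (Inr j)}"
proof -
  assume "i<a"
  have "{w \<in> Kab_V a b. Kab_E (Inl i) w \<and> deg (Kab_V a b) Kab_E w \<le> f w} = Inr ` {j. j<b \<and> a \<le> f (Inr j)}"
    using Kab_deg_Inr[unfolded Kab_V_def, of _ b a] by (auto simp: Kab_V_def Kab_E_def)
  then show ?thesis by (simp add: card_image)
qed

lemma Kab_fire_Inr: "j < b \<Longrightarrow>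
   card {w \<in> Kab_V a b. Kab_E (Inr j) w \<and> deg (Kab_V a b) Kab_E w \<le> f w} = card {i. i<a \<and> b \<le> f (Inl i)}"
proof -
  assume "j<b"
  have "{w \<in> Kab_V a b. Kab_E (Inr j) w \<and> deg (Kab_V a b) Kab_E w \<le> f w} = Inl ` {i. i<a \<and> b \<le> f (Inl i)}"
    using Kab_deg_Inl[unfolded Kab_V_def, of _ a b] by (auto simp: Kab_V_def Kab_E_def)
  then show ?thesis by (simp add: card_image)
qed

theorem corollary3p6:
  fixes a b :: nat and \<sigma> :: "nat + nat \<Rightarrow> nat"
  assumes "a \<ge> 1" and "b \<ge> 1"
  shows "(odd (period (Kab_V a b) Kab_E \<sigma>) \<longrightarrow> period (Kab_V a b) Kab_E \<sigma> \<le> min a b)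
       \<and> (even (period (Kab_V a b) Kab_E \<sigma>) \<longrightarrow> period (Kab_V a b) Kab_E \<sigma> \<le> 2 * min a b)"
proof -
  define V where "V = Kab_V a b"
  define U where "U = pstep V Kab_E"
  define X where "X t = (U^^t) \<sigma>" for t
  define x where "x t i = X t (Inl i)" for t i
  define y where "y t j = X t (Inr j)" for t j
  have XS: "X (Suc t) = U (X t)" for t by (simp add: X_def)
  have inl: "i<a \<Longrightarrow> Inl i \<in> V" for i by (simp add: V_def Kab_V_def)
  have inr: "j<b \<Longrightarrow> Inr j \<in> V" for j by (simp add: V_def Kab_V_def)
  have xs: "x (Suc t) i = (if x t i \<ge> b then x t i - b else x t i) + card {j. j<b \<and> y t j \<ge> a}" if "i<a" for t i
    using that inl[OF that] Kab_deg_Inl[OF that, of b] Kab_fire_Inl[OF that, of b "X t"]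
    by (simp add: x_def y_def XS U_def pstep_def V_def)
  have ys: "y (Suc t) j = (if y t j \<ge> a then y t j - a else y t j) + card {i. i<a \<and> x t i \<ge> b}" if "j<b" for t j
    using that inr[OF that] Kab_deg_Inr[OF that, of a] Kab_fire_Inr[OF that, of a "X t"]
    by (simp add: x_def y_def XS U_def pstep_def V_def)
  have B: "bip a b x y" using assms xs ys by unfold_locales auto
  have Bsw: "bip b a y x" using B unfolding bip_def by auto
  have offV: "v \<notin> V \<Longrightarrow> X t v = \<sigma> v" for v t
    by (induction t) (simp_all add: XS U_def pstep_def X_def)
  have Xeq: "X s = X t" if "\<forall>i<a. x s i = x t i" "\<forall>j<b. y s j = y t j" for s t
  proof
    fix v show "X s v = X t v"
    proof (cases v)
      case (Inl i) show ?thesis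
      proof (cases "i<a")
        case True then show ?thesis using that Inl by (simp add: x_def)
      next
        case False then have "Inl i \<notin> V" by (auto simp: V_def Kab_V_def)
        then show ?thesis using offV Inl by simp
      qed
    next
      case (Inr j) show ?thesis
      proof (cases "j<b")
        case True then show ?thesis using that Inr by (simp add: y_def)
      next
        case False then have "Inr j \<notin> V" by (auto simp: V_def Kab_V_def)
        then show ?thesis using offV Inr by simp
      qed
    qed
  qed
  define M where "M = (\<Sum>i<a. x 0 i) + (\<Sum>j<b. y 0 j) + 2*a + 2*b"
  have xb: "x t i \<le> M" if "i<a" for t i
  proof -
    have "x t i \<le> max (x 0 i) (2*b)" using bip.xbound[OF B that] .
    moreover have "x 0 i \<le> (\<Sum>i<a. x 0 i)" using that by (intro member_le_sum) auto
    ultimately show ?thesis by (auto simp: M_def)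
  qed
  have yb: "y t j \<le> M" if "j<b" for t j
  proof -
    have "y t j \<le> max (y 0 j) (2*a)" using bip.xbound[OF Bsw that] .
    moreover have "y 0 j \<le> (\<Sum>j<b. y 0 j)" using that by (intro member_le_sum) auto
    ultimately show ?thesis by (auto simp: M_def)
  qed
  define h where "h t = (restrict (x t) {..<a}, restrict (y t) {..<b})" for t
  have "range h \<subseteq> ({..<a} \<rightarrow>\<^sub>E {..M}) \<times> ({..<b} \<rightarrow>\<^sub>E {..M})"
    using xb yb by (auto simp: h_def split: if_splits)
  moreover have "finite (({..<a} \<rightarrow>\<^sub>E {..M}) \<times> ({..<b} \<rightarrow>\<^sub>E {..M}))"
    by (intro finite_cartesian_product finite_PiE) auto
  ultimately have "finite (range h)" by (rule finite_subset)
  then have "\<not> inj h" using finite_imageD infinite_UNIV_nat by blast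
  then obtain s0 t0 where st: "h s0 = h t0" "s0 < t0"
    unfolding inj_def by (metis linorder_neqE_nat)
  have st_eq: "(\<forall>i<a. x (s0+m) i = x (t0+m) i) \<and> (\<forall>j<b. y (s0+m) j = y (t0+m) j)" for m
  proof (induction m)
    case 0
    have "restrict (x s0) {..<a} = restrict (x t0) {..<a}" "restrict (y s0) {..<b} = restrict (y t0) {..<b}"
      using st(1) by (auto simp: h_def)
    then show ?case by (metis add_0_right lessThan_iff restrict_apply')
  next
    case (Suc m) then show ?case using bip.det[OF B] by simp
  qed
  have exP: "\<exists>P. P > 0 \<and> (\<exists>T. \<forall>t\<ge>T. (U ^^ (t + P)) \<sigma> = (U ^^ t) \<sigma>)"
  proof (intro exI conjI)
    show "t0 - s0 > 0" using st by simp
    show "\<forall>t\<ge>s0. (U ^^ (t + (t0 - s0))) \<sigma> = (U ^^ t) \<sigma>"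
    proof (intro allI impI)
      fix t assume "s0 \<le> t"
      then obtain m where m: "t = s0 + m" using le_Suc_ex by blast
      have e: "t + (t0 - s0) = t0 + m" using m st by simp
      have "X (t0+m) = X (s0+m)" using Xeq[of "t0+m" "s0+m"] st_eq[of m] by simp
      then show "(U ^^ (t + (t0 - s0))) \<sigma> = (U ^^ t) \<sigma>"
        unfolding e unfolding m X_def .
    qed
  qed
  define P where "P = period (Kab_V a b) Kab_E \<sigma>"
  have Pdef: "P = (LEAST p. p > 0 \<and> (\<exists>T. \<forall>t\<ge>T. (U ^^ (t + p)) \<sigma> = (U ^^ t) \<sigma>))"
    by (simp add: P_def period_def U_def V_def)
  have PP: "P > 0 \<and> (\<exists>T. \<forall>t\<ge>T. (U ^^ (t + P)) \<sigma> = (U ^^ t) \<sigma>)"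
    unfolding Pdef by (rule LeastI_ex[OF exP])
  have Ple: "P \<le> q" if "q > 0" "\<exists>T. \<forall>t\<ge>T. (U ^^ (t + q)) \<sigma> = (U ^^ t) \<sigma>" for q
    unfolding Pdef by (rule Least_le) (use that in blast)
  obtain T0 where T0: "\<forall>t\<ge>T0. X (t + P) = X t" using PP by (auto simp: X_def)
  define x' where "x' t i = x (t + T0) i" for t i
  define y' where "y' t j = y (t + T0) j" for t j
  have B': "bip a b x' y'" using assms xs ys unfolding x'_def y'_def by unfold_locales auto
  have perx: "x' (t + P) i = x' t i" for t i
    using T0[rule_format, of "t + T0"] by (simp add: x'_def x_def algebra_simps)
  have pery: "y' (t + P) j = y' t j" for t j
    using T0[rule_format, of "t + T0"] by (simp add: y'_def y_def algebra_simps)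
  have perx': "\<And>t i. i<a \<Longrightarrow> x' (t+P) i = x' t i" by (rule perx)
  have pery': "\<And>t j. j<b \<Longrightarrow> y' (t+P) j = y' t j" by (rule pery)
  have crit: "P \<le> q" if q: "q > 0" and t2: "\<forall>t\<ge>t2. (\<forall>i<a. x' (t+q) i = x' t i) \<and> (\<forall>j<b. y' (t+q) j = y' t j)" for q t2
  proof (rule Ple[OF q], intro exI allI impI)
    fix t assume "t2 + T0 \<le> t"
    then have u: "t = (t - T0) + T0" "t2 \<le> t - T0" by simp_all
    define u where "u = t - T0"
    note u = u[folded u_def]
    have "X (u + q + T0) = X (u + T0)" using t2[rule_format, OF u(2)]
      by (intro Xeq) (simp_all add: x'_def y'_def)
    then show "(U ^^ (t + q)) \<sigma> = (U ^^ t) \<sigma>" using u by (simp add: X_def algebra_simps)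
  qed
  have Ppos: "P > 0" using PP by simp
  show ?thesis
  proof (cases "(\<forall>t i. i<a \<longrightarrow> x' t i < 2*b) \<and> (\<forall>t j. j<b \<longrightarrow> y' t j < 2*a)")
    case True
    interpret bip a b x' y' by (rule B')
    have bx': "\<And>t i. i<a \<Longrightarrow> x' t i < 2*b" using True by blast
    have by': "\<And>t j. j<b \<Longrightarrow> y' t j < 2*a" using True by blast
    obtain n1 where n1: "n1 > 0" "n1 \<le> a" "n1 dvd P"
      "\<forall>t\<ge>2. (\<forall>i<a. x' (t+2*n1) i = x' t i) \<and> (\<forall>j<b. y' (t+2*n1) j = y' t j)"
      using main[OF Ppos perx' pery' bx' by'] by blast
    obtain n2 where n2: "n2 > 0" "n2 \<le> b" "n2 dvd P"
      "\<forall>t\<ge>2. (\<forall>j<b. y' (t+2*n2) j = y' t j) \<and> (\<forall>i<a. x' (t+2*n2) i = x' t i)"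
      using sw.main[OF Ppos pery' perx' by' bx'] by blast
    have P1: "P \<le> 2*n1" using n1 by (intro crit[of "2*n1" 2]) auto
    have P2: "P \<le> 2*n2" using n2 by (intro crit[of "2*n2" 2]) auto
    have o: "odd P \<longrightarrow> P \<le> min a b"
    proof
      assume "odd P"
      then have "P \<le> n1" "P \<le> n2" using odd_bound n1 n2 P1 P2 by auto
      then show "P \<le> min a b" using n1 n2 by simp
    qed
    have e: "P \<le> 2 * min a b" using P1 P2 n1 n2 by simp
    show ?thesis using o e unfolding P_def by simp
  next
    case False
    interpret bip a b x' y' by (rule B')
    have fix1: "(\<forall>i<a. x' (Suc t) i = x' t i) \<and> (\<forall>j<b. y' (Suc t) j = y' t j)" for t
    proof -
      from False consider (X) t1 i1 where "i1 < a" "\<not> x' t1 i1 < 2*b" | (Y) t1 j1 where "j1 < b" "\<not> y' t1 j1 < 2*a"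
        by blast
      then show ?thesis
      proof cases
        case X then show ?thesis using trivial[OF Ppos perx' pery', of i1 t1] by simp
      next
        case Y then have "(\<forall>j<b. y' (Suc t) j = y' t j) \<and> (\<forall>i<a. x' (Suc t) i = x' t i)"
          using sw.trivial[OF Ppos pery' perx', of j1 t1] by simp
        then show ?thesis by simp
      qed
    qed
    have "P \<le> 1" using fix1 by (intro crit[of 1 0]) simp_all
    then show ?thesis using assms unfolding P_def by auto
  qed
qed


end
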